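(* Let $(a_n)$ be positive reals and $(b_n)$ nonzero complex numbers. Suppose there are constants $0<\nu_0<\nu_1<\nu_2<1$ with $$a_{n+1}/a_n<\nu_0\quad\text{and}\quad \nu_1<|b_{n+1}/b_n|<\nu_2\quad\text{for all }n\in\mathbb{N}.$$ Then $\pi\in\ell^\infty$ and $\Phi$ spatially exponentially decays.
   Context: $\pi_n:=2\prod_{m\ge1,\,m\ne n}\frac{1+a_m/a_n}{1-a_m/a_n}$. $\Phi=[\phi_{ij}]_{i,j\ge1}$ with $\phi_{ij}:=\frac{|b_i/b_j|}{1+a_i/a_j}$. $\Phi$ spatially exponentially decays if there are $C>0$, $\mu\in(0,1)$ with $\phi_{ij}\le C\mu^{|i-j|}$ for all $i,j\in\mathbb{N}$. *)

theory Defs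
  imports "HOL-Analysis.Analysis"
begin

(* Sequences are indexed by n \<ge> 1; values at index 0 are irrelevant. *)

definition pi_factor :: "(nat \<Rightarrow> real) \<Rightarrow> nat \<Rightarrow> nat \<Rightarrow> real" where
  "pi_factor a n m = (if m = 0 \<or> m = n then 1 else (1 + a m / a n) / (1 - a m / a n))"

definition pi_seq :: "(nat \<Rightarrow> real) \<Rightarrow> nat \<Rightarrow> real" where
  "pi_seq a n = 2 * prodinf (pi_factor a n)"

definition phi :: "(nat \<Rightarrow> real) \<Rightarrow> (nat \<Rightarrow> complex) \<Rightarrow> nat \<Rightarrow> nat \<Rightarrow> real" where
  "phi a b i j = cmod (b i / b j) / (1 + a i / a j)"

definition spatially_exp_decays :: "(nat \<Rightarrow> nat \<Rightarrow> real) \<Rightarrow> bool" where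
  "spatially_exp_decays F \<longleftrightarrow>
     (\<exists>C>0. \<exists>\<mu>. 0 < \<mu> \<and> \<mu> < 1 \<and>
        (\<forall>i\<ge>1. \<forall>j\<ge>1. F i j \<le> C * \<mu> ^ nat \<bar>int i - int j\<bar>))"

definition pi_in_linfty :: "(nat \<Rightarrow> real) \<Rightarrow> bool" where
  "pi_in_linfty a \<longleftrightarrow>
     (\<forall>n\<ge>1. convergent_prod (pi_factor a n)) \<and> (\<exists>B. \<forall>n\<ge>1. \<bar>pi_seq a n\<bar> \<le> B)"

end

theory Submission
  imports Defs
begin

lemma geo_dec:
  fixes a :: "nat \<Rightarrow> real"
  assumes a_pos: "\<And>n. n \<ge> 1 \<Longrightarrow> a n > 0"
    and r: "0 < r"
    and ratio: "\<And>n. n \<ge> 1 \<Longrightarrow> a (Suc n) \<le> r * a n"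
    and j: "j \<ge> 1"
  shows "a (j + k) \<le> r ^ k * a j"
proof (induction k)
  case 0 then show ?case by simp
next
  case (Suc k)
  have "a (j + Suc k) \<le> r * a (j + k)" using ratio[of "j+k"] j by simp
  also have "\<dots> \<le> r * (r ^ k * a j)" using Suc r by (simp add: mult_left_mono)
  finally show ?case by (simp add: mult.assoc)
qed

lemma geo_inc:
  fixes a :: "nat \<Rightarrow> real"
  assumes r: "0 < r"
    and ratio: "\<And>n. n \<ge> 1 \<Longrightarrow> a (Suc n) \<ge> r * a n"
    and j: "j \<ge> 1"
  shows "a (j + k) \<ge> r ^ k * a j"
proof (induction k)
  case 0 then show ?case by simp
next
  case (Suc k)
  have "a (j + Suc k) \<ge> r * a (j + k)" using ratio[of "j+k"] j by simp
  moreover have "r * (r ^ k * a j) \<le> r * a (j + k)" using Suc r by (simp add: mult_left_mono)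
  ultimately show ?case by (simp add: mult.assoc)
qed

lemma sum_left:
  fixes r :: real assumes "0 \<le> r" "r < 1"
  shows "(\<Sum>i<n. r ^ (n - i)) \<le> 1 / (1 - r)"
proof -
  have "(\<Sum>i<n. r ^ (n - i)) = (\<Sum>i<n. r ^ (n - (n - Suc i)))"
    by (rule sum.nat_diff_reindex[symmetric])
  also have "\<dots> = (\<Sum>i<n. r ^ Suc i)"
    by (rule sum.cong) auto
  also have "\<dots> = r * (\<Sum>i<n. r ^ i)" by (simp add: sum_distrib_left)
  also have "\<dots> \<le> 1 * (1 / (1 - r))"
  proof (rule mult_mono)
    show "(\<Sum>i<n. r ^ i) \<le> 1 / (1 - r)"
      using sum_le_suminf[of "\<lambda>i. r^i" "{..<n}"] summable_geometric[of r] suminf_geometric[of r] assms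
      by auto
  qed (use assms in \<open>auto intro: sum_nonneg\<close>)
  finally show ?thesis by simp
qed

lemma sum_right:
  fixes r :: real assumes "0 \<le> r" "r < 1"
  shows "(\<Sum>i=n..n+N. r ^ (i - n)) \<le> 1 / (1 - r)"
proof -
  have "(\<Sum>i=n..n+N. r ^ (i - n)) = (\<Sum>i=0+n..N+n. r ^ (i - n))" by (simp add: add.commute)
  also have "\<dots> = (\<Sum>i=0..N. r ^ i)" by (subst sum.shift_bounds_cl_nat_ivl) simp
  also have "\<dots> \<le> 1 / (1 - r)"
    using sum_le_suminf[of "\<lambda>i. r^i" "{0..N}"] summable_geometric[of r] suminf_geometric[of r] assms
    by auto
  finally show ?thesis .
qed

lemma sum_abs:
  fixes r :: real assumes "0 \<le> r" "r < 1"
  shows "(\<Sum>i\<le>N. r ^ nat \<bar>int i - int n\<bar>) \<le> 2 / (1 - r)"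
proof -
  let ?g = "\<lambda>i. r ^ nat \<bar>int i - int n\<bar>"
  have sub: "{..N} \<subseteq> {..<n} \<union> {n..n+N}" by auto
  have "(\<Sum>i\<le>N. ?g i) \<le> (\<Sum>i\<in>{..<n} \<union> {n..n+N}. ?g i)"
    by (rule sum_mono2) (use sub assms in auto)
  also have "\<dots> = (\<Sum>i<n. ?g i) + (\<Sum>i=n..n+N. ?g i)"
    by (rule sum.union_disjoint) auto
  also have "(\<Sum>i<n. ?g i) = (\<Sum>i<n. r ^ (n - i))"
    by (rule sum.cong) (auto simp: nat_diff_distrib)
  also have "(\<Sum>i=n..n+N. ?g i) = (\<Sum>i=n..n+N. r ^ (i - n))"
    by (rule sum.cong) (auto simp: nat_diff_distrib)
  finally show ?thesis using sum_left[OF assms, of n] sum_right[OF assms, of n N] by simp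
qed

lemma frac_bound:
  fixes x q p :: real assumes "0 < x" "x \<le> q" "x \<le> p" "p < 1"
  shows "2 * x / (1 - x) \<le> 2 / (1 - p) * q" "(1 + x) / (1 - x) = 1 + 2 * x / (1 - x)"
proof -
  have "2 * x / (1 - x) \<le> 2 * q / (1 - x)" using assms by (intro divide_right_mono) auto
  also have "\<dots> \<le> 2 * q / (1 - p)" using assms by (intro divide_left_mono) auto
  finally show "2 * x / (1 - x) \<le> 2 / (1 - p) * q" by simp
  show "(1 + x) / (1 - x) = 1 + 2 * x / (1 - x)" using assms by (simp add: field_simps)
qed

context
  fixes a :: "nat \<Rightarrow> real" and \<nu>0 :: real
  assumes a_pos: "\<And>n. n \<ge> 1 \<Longrightarrow> a n > 0"
    and nu0: "0 < \<nu>0" "\<nu>0 < 1"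
    and ratio_a: "\<And>n. n \<ge> 1 \<Longrightarrow> a (Suc n) / a n < \<nu>0"
begin

lemma ratio_le: "n \<ge> 1 \<Longrightarrow> a (Suc n) \<le> \<nu>0 * a n"
  using ratio_a[of n] a_pos[of n] by (simp add: divide_less_eq less_imp_le)

lemma a_dec: "j \<ge> 1 \<Longrightarrow> a (j + k) \<le> \<nu>0 ^ k * a j"
  using geo_dec[of a \<nu>0 j k] a_pos nu0 ratio_le by auto

lemma factor_bounds:
  assumes n: "n \<ge> 1" and m: "m \<ge> 1" and mn: "m \<noteq> n"
  shows "pi_factor a n m \<noteq> 0"
    "\<bar>pi_factor a n m\<bar> \<le> 1 + 2 / (1 - \<nu>0) * \<nu>0 ^ nat \<bar>int m - int n\<bar>"
    "m > n \<Longrightarrow> \<bar>pi_factor a n m - 1\<bar> \<le> 2 / (1 - \<nu>0) * \<nu>0 ^ nat \<bar>int m - int n\<bar>"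
proof -
  have f: "pi_factor a n m = (1 + a m / a n) / (1 - a m / a n)"
    using m mn by (simp add: pi_factor_def)
  have an: "a n > 0" and am: "a m > 0" using a_pos n m by auto
  let ?e = "2 / (1 - \<nu>0) * \<nu>0 ^ nat \<bar>int m - int n\<bar>"
  have "pi_factor a n m \<noteq> 0 \<and> \<bar>pi_factor a n m\<bar> \<le> 1 + ?e \<and> (m > n \<longrightarrow> \<bar>pi_factor a n m - 1\<bar> \<le> ?e)"
  proof (cases "m > n")
    case True
    then obtain k where k: "m = n + k" "k \<ge> 1" by (metis le_add_diff_inverse less_imp_le_nat less_one not_le zero_less_diff)
    define x where "x = a m / a n"
    have x0: "0 < x" using an am by (simp add: x_def)
    have "x \<le> \<nu>0 ^ k" using a_dec[OF n, of k] an k by (simp add: x_def divide_le_eq)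
    moreover have "\<nu>0 ^ k \<le> \<nu>0" using power_decreasing[of 1 k \<nu>0] k nu0 by simp
    ultimately have xq: "x \<le> \<nu>0 ^ k" "x \<le> \<nu>0" "x < 1" using nu0 by auto
    have ek: "nat \<bar>int m - int n\<bar> = k" using k by simp
    have fx: "pi_factor a n m = 1 + 2 * x / (1 - x)" using f frac_bound(2)[OF x0 xq(1), of \<nu>0] xq nu0 by (simp add: x_def)
    have b: "2 * x / (1 - x) \<le> ?e" using frac_bound(1)[OF x0 xq(1), of \<nu>0] xq nu0 ek by simp
    have pos: "2 * x / (1 - x) \<ge> 0" using x0 xq by simp
    show ?thesis proof (intro conjI impI)
      show "pi_factor a n m \<noteq> 0" using fx pos by linarith
      have "\<bar>pi_factor a n m\<bar> = pi_factor a n m" using fx pos by linarith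
      then show "\<bar>pi_factor a n m\<bar> \<le> 1 + ?e" using fx b by linarith
      have "\<bar>pi_factor a n m - 1\<bar> = 2 * x / (1 - x)" using fx pos by linarith
      then show "\<bar>pi_factor a n m - 1\<bar> \<le> ?e" using b by linarith
    qed
  next
    case False
    then have lt: "m < n" using mn by auto
    then obtain k where k: "n = m + k" "k \<ge> 1" by (metis le_add_diff_inverse less_imp_le_nat less_one not_le zero_less_diff)
    define y where "y = a n / a m"
    have y0: "0 < y" using an am by (simp add: y_def)
    have "y \<le> \<nu>0 ^ k" using a_dec[OF m, of k] am k by (simp add: y_def divide_le_eq)
    moreover have "\<nu>0 ^ k \<le> \<nu>0" using power_decreasing[of 1 k \<nu>0] k nu0 by simp
    ultimately have yq: "y \<le> \<nu>0 ^ k" "y \<le> \<nu>0" "y < 1" using nu0 by auto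
    have ek: "nat \<bar>int m - int n\<bar> = k" using k by simp
    have inv: "a m / a n = 1 / y" using an am by (simp add: y_def)
    have yne: "1 - y \<noteq> 0" using yq by simp
    have "(1 + 1 / y) / (1 - 1 / y) = (y + 1) / (y - 1)" using y0 yne
      by (simp add: divide_simps)
    also have "\<dots> = - ((1 + y) / (1 - y))" using yne by (simp add: divide_simps) (simp add: algebra_simps)
    finally have fy: "pi_factor a n m = - ((1 + y) / (1 - y))" using f inv by simp
    have fy2: "(1 + y) / (1 - y) = 1 + 2 * y / (1 - y)" using frac_bound(2)[OF y0 yq(1), of \<nu>0] yq nu0 by simp
    have b: "2 * y / (1 - y) \<le> ?e" using frac_bound(1)[OF y0 yq(1), of \<nu>0] yq nu0 ek by simp
    have pos: "2 * y / (1 - y) \<ge> 0" using y0 yq by simp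
    show ?thesis using fy fy2 b pos False by auto
  qed
  then show "pi_factor a n m \<noteq> 0"
    "\<bar>pi_factor a n m\<bar> \<le> 1 + ?e"
    "m > n \<Longrightarrow> \<bar>pi_factor a n m - 1\<bar> \<le> ?e" by auto
qed


lemma pi_conv:
  assumes n: "n \<ge> 1"
  shows "convergent_prod (pi_factor a n)"
proof -
  define c where "c = 2 / (1 - \<nu>0)"
  define z where "z m = pi_factor a n m - 1" for m
  have sg: "summable (\<lambda>m. c * \<nu>0 ^ (m - n))"
  proof -
    have "summable (\<lambda>k. c * \<nu>0 ^ k)" using nu0 by (intro summable_mult summable_geometric) auto
    then have "summable (\<lambda>k. c * \<nu>0 ^ ((k + n) - n))" by simp
    then show ?thesis by (rule summable_iff_shift[THEN iffD1])
  qed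
  have "summable (\<lambda>m. \<bar>z m\<bar>)"
  proof (rule summable_comparison_test'[OF sg, of "Suc n"])
    fix m assume m: "Suc n \<le> m"
    have "nat \<bar>int m - int n\<bar> = m - n" using m by simp
    then show "norm \<bar>z m\<bar> \<le> c * \<nu>0 ^ (m - n)"
      using factor_bounds(3)[OF n, of m] m n by (simp add: z_def c_def)
  qed
  moreover have "z m \<noteq> -1" for m
  proof (cases "m = 0 \<or> m = n")
    case True then show ?thesis by (auto simp: z_def pi_factor_def)
  next
    case False then show ?thesis using factor_bounds(1)[OF n, of m] by (auto simp: z_def)
  qed
  ultimately have "convergent_prod (\<lambda>m. 1 + z m)" by (rule summable_imp_convergent_prod_real)
  then show ?thesis by (simp add: z_def)
qed

lemma pi_bound:
  assumes n: "n \<ge> 1"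
  shows "\<bar>pi_seq a n\<bar> \<le> 2 * exp (2 / (1 - \<nu>0) * (2 / (1 - \<nu>0)))"
proof -
  define c where "c = 2 / (1 - \<nu>0)"
  have c0: "c \<ge> 0" using nu0 by (simp add: c_def)
  define e where "e i = c * \<nu>0 ^ nat \<bar>int i - int n\<bar>" for i
  have e0: "e i \<ge> 0" for i using c0 nu0 by (simp add: e_def)
  have part: "\<bar>\<Prod>i\<le>N. pi_factor a n i\<bar> \<le> exp (c * (2 / (1 - \<nu>0)))" for N
  proof -
    have "\<bar>\<Prod>i\<le>N. pi_factor a n i\<bar> = (\<Prod>i\<le>N. \<bar>pi_factor a n i\<bar>)" by (rule abs_prod)
    also have "\<dots> \<le> (\<Prod>i\<le>N. exp (e i))"
    proof (rule prod_mono)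
      fix i assume "i \<in> {..N}"
      have "\<bar>pi_factor a n i\<bar> \<le> exp (e i)"
      proof (cases "i = 0 \<or> i = n")
        case True
        then have "\<bar>pi_factor a n i\<bar> = 1" by (auto simp: pi_factor_def)
        then show ?thesis using e0[of i] by simp
      next
        case False
        then have "\<bar>pi_factor a n i\<bar> \<le> 1 + e i" using factor_bounds(2)[OF n, of i] by (simp add: e_def c_def)
        also have "\<dots> \<le> exp (e i)" by (rule exp_ge_add_one_self)
        finally show ?thesis .
      qed
      then show "0 \<le> \<bar>pi_factor a n i\<bar> \<and> \<bar>pi_factor a n i\<bar> \<le> exp (e i)" by simp
    qed
    also have "\<dots> = exp (\<Sum>i\<le>N. e i)" by (simp add: exp_sum)
    also have "\<dots> \<le> exp (c * (2 / (1 - \<nu>0)))"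
    proof -
      have "(\<Sum>i\<le>N. e i) = c * (\<Sum>i\<le>N. \<nu>0 ^ nat \<bar>int i - int n\<bar>)" by (simp add: e_def sum_distrib_left)
      also have "\<dots> \<le> c * (2 / (1 - \<nu>0))" using sum_abs[of \<nu>0 n N] nu0 c0 by (intro mult_left_mono) auto
      finally show ?thesis by simp
    qed
    finally show ?thesis .
  qed
  have lim: "(\<lambda>N. \<bar>\<Prod>i\<le>N. pi_factor a n i\<bar>) \<longlonglongrightarrow> \<bar>prodinf (pi_factor a n)\<bar>"
    by (intro tendsto_rabs convergent_prod_LIMSEQ pi_conv n)
  have "\<bar>prodinf (pi_factor a n)\<bar> \<le> exp (c * (2 / (1 - \<nu>0)))"
    by (rule LIMSEQ_le_const2[OF lim]) (use part in auto)
  then show ?thesis by (simp add: pi_seq_def c_def)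
qed

end

theorem theorem5:
  fixes a :: "nat \<Rightarrow> real" and b :: "nat \<Rightarrow> complex" and \<nu>0 \<nu>1 \<nu>2 :: real
  assumes a_pos: "\<And>n. n \<ge> 1 \<Longrightarrow> a n > 0"
    and b_nz: "\<And>n. n \<ge> 1 \<Longrightarrow> b n \<noteq> 0"
    and nu: "0 < \<nu>0" "\<nu>0 < \<nu>1" "\<nu>1 < \<nu>2" "\<nu>2 < 1"
    and ratio_a: "\<And>n. n \<ge> 1 \<Longrightarrow> a (Suc n) / a n < \<nu>0"
    and ratio_b: "\<And>n. n \<ge> 1 \<Longrightarrow> \<nu>1 < cmod (b (Suc n) / b n) \<and> cmod (b (Suc n) / b n) < \<nu>2"
  shows "pi_in_linfty a \<and> spatially_exp_decays (phi a b)"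
proof
  have nu0: "0 < \<nu>0" "\<nu>0 < 1" using nu by auto
  show "pi_in_linfty a"
    unfolding pi_in_linfty_def
    using pi_conv[of a \<nu>0, OF a_pos nu0 ratio_a] pi_bound[of a \<nu>0, OF a_pos nu0 ratio_a] by blast
next
  define B where "B n = cmod (b n)" for n
  have Bpos: "n \<ge> 1 \<Longrightarrow> B n > 0" for n using b_nz by (simp add: B_def)
  have Brat: "n \<ge> 1 \<Longrightarrow> \<nu>1 * B n < B (Suc n) \<and> B (Suc n) < \<nu>2 * B n" for n
    using ratio_b[of n] Bpos[of n] by (simp add: B_def norm_divide divide_less_eq less_divide_eq)
  have Bdec: "j \<ge> 1 \<Longrightarrow> B (j + k) \<le> \<nu>2 ^ k * B j" for j k
    using geo_dec[of B \<nu>2 j k] Bpos Brat nu less_imp_le by (smt (verit))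
  have Binc: "j \<ge> 1 \<Longrightarrow> B (j + k) \<ge> \<nu>1 ^ k * B j" for j k
    using geo_inc[of \<nu>1 B j k] Brat nu less_imp_le by (smt (verit))
  have adec: "j \<ge> 1 \<Longrightarrow> a (j + k) \<le> \<nu>0 ^ k * a j" for j k
    using a_dec[of a \<nu>0 j k, OF a_pos _ _ ratio_a] nu by auto
  define \<mu> where "\<mu> = max \<nu>2 (\<nu>0 / \<nu>1)"
  have mu: "0 < \<mu>" "\<mu> < 1" "\<nu>2 \<le> \<mu>" "\<nu>0 / \<nu>1 \<le> \<mu>" using nu by (auto simp: \<mu>_def)
  have main: "phi a b i j \<le> 1 * \<mu> ^ nat \<bar>int i - int j\<bar>" if i: "i \<ge> 1" and j: "j \<ge> 1" for i j
  proof (cases "j \<le> i")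
    case True
    then obtain k where k: "i = j + k" using le_Suc_ex by blast
    have ek: "nat \<bar>int i - int j\<bar> = k" using k by simp
    have Bj: "B j > 0" using Bpos j by simp
    have r: "cmod (b i / b j) = B i / B j" by (simp add: B_def norm_divide)
    have "B i / B j \<le> \<nu>2 ^ k" using Bdec[OF j, of k] Bj k by (simp add: divide_le_eq)
    moreover have "1 \<le> 1 + a i / a j" using a_pos[OF i] a_pos[OF j] by simp
    moreover have "B i / B j \<ge> 0" using Bj Bpos[OF i] by simp
    ultimately have "phi a b i j \<le> \<nu>2 ^ k" unfolding phi_def r
      by (smt (verit) divide_le_eq_1 divide_nonneg_nonneg div_by_1 frac_le zero_less_one)
    also have "\<dots> \<le> \<mu> ^ k" using nu mu by (intro power_mono) auto
    finally show ?thesis using ek by simp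
  next
    case False
    then obtain k where k: "j = i + k" using le_Suc_ex nat_le_linear by blast
    have ek: "nat \<bar>int i - int j\<bar> = k" using k by simp
    have Bi: "B i > 0" and Bj: "B j > 0" using Bpos i j by auto
    have Ai: "a i > 0" and Aj: "a j > 0" using a_pos i j by auto
    have r: "cmod (b i / b j) = B i / B j" by (simp add: B_def norm_divide)
    have "phi a b i j = (B i * a j) / (B j * (a j + a i))" unfolding phi_def r
      using Bj Aj by (simp add: field_simps)
    also have "\<dots> \<le> (B i * (\<nu>0 ^ k * a i)) / ((\<nu>1 ^ k * B i) * a i)"
    proof (rule frac_le)
      show "0 \<le> B i * (\<nu>0 ^ k * a i)" using Bi Ai nu by simp
      show "B i * a j \<le> B i * (\<nu>0 ^ k * a i)" using adec[OF i, of k] k Bi by simp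
      show "0 < \<nu>1 ^ k * B i * a i" using Bi Ai nu by simp
      have "\<nu>1 ^ k * B i \<le> B j" using Binc[OF i, of k] k by simp
      then have "\<nu>1 ^ k * B i * a i \<le> B j * a i" using Ai by simp
      also have "\<dots> \<le> B j * (a j + a i)" using Bj Aj by simp
      finally show "\<nu>1 ^ k * B i * a i \<le> B j * (a j + a i)" .
    qed
    also have "\<dots> = (\<nu>0 / \<nu>1) ^ k" using Bi Ai nu by (simp add: power_divide)
    also have "\<dots> \<le> \<mu> ^ k" using nu mu by (intro power_mono) auto
    finally show ?thesis using ek by simp
  qed
  show "spatially_exp_decays (phi a b)"
    unfolding spatially_exp_decays_def
    using main mu by (intro exI[of _ 1] conjI exI[of _ \<mu>]) auto
qed

end
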